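(* Let $n\ge 1$, let $C$ be a convex subset of $\mathbb{R}^n$, let $M$ be a smooth manifold, and let $f:\mathbb{R}^n\to M$ be a differentiable function. If $\mathrm{Sens}_C(f)=S_n$, then $f$ is one-to-one on $C$.
   Context: Sign of a real number: $\mathrm{sgn}(x)=+1,0,-1$ according as $x>0$, $x=0$, $x<0$. For $g:\mathbb{R}^n\to\mathbb{R}$ and a nonempty $C\subseteq\mathbb{R}^n$, define $\mathrm{sign}_C(g)=+1$ if $g(c)>0$ for all $c\in C$; $0$ if $g(c)=0$ for all $c\in C$; $-1$ if $g(c)<0$ for all $c\in C$; and $u$ (a formal symbol) otherwise. If $g$ is differentiable on $C$, its total sign over $C$ is the tuple $\mathrm{Sign}_C(g)=\big(\mathrm{sign}_C(\partial g/\partial x_1),\dots,\mathrm{sign}_C(\partial g/\partial x_n)\big)\in\{1,0,-1,u\}^n$. $S_n$ denotes the set of all nonzero $n$-tuples $s=(s_1,\dots,s_n)\in\{-1,0,1\}^n$ whose first nonzero entry equals $1$. A tuple $t=(t_1,\dots,t_n)\in\{1,0,-1,u\}^n$ eliminates $s\in S_n$ if: (i) $t_i\neq0$ and $s_i\neq0$ for some $i$; (ii) there is $k\in\{+1,-1\}$ with $t_i=k s_i$ for all $i$ such that $s_i\neq 0$ and $t_i\neq0$; (iii) $s_i=0$ whenever $t_i=u$. For a smooth manifold $M$, a convex $C\subseteq\mathbb{R}^n$ and a differentiable $f:\mathbb{R}^n\to M$, $\mathrm{Sens}_C(f)$ is the set of all $v\in S_n$ for which there exists a differentiable function $\pi:M\to\mathbb{R}$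 such that $\mathrm{Sign}_C(\pi\circ f)$ eliminates $v$. *)

theory Defs
  imports "HOL-Analysis.Analysis"
begin

fun iter_dderiv :: "'a::real_normed_vector list \<Rightarrow> ('a \<Rightarrow> 'b::real_normed_vector) \<Rightarrow> 'a \<Rightarrow> 'b" where
  "iter_dderiv [] g = g"
| "iter_dderiv (v # vs) g = (\<lambda>x. frechet_derivative (iter_dderiv vs g) (at x) v)"

definition smooth_on :: "'a::real_normed_vector set \<Rightarrow> ('a \<Rightarrow> 'b::real_normed_vector) \<Rightarrow> bool" where
  "smooth_on U g \<longleftrightarrow> (\<forall>vs. iter_dderiv vs g differentiable_on U)"

text \<open>The manifold carrier is the whole
  type 'm, which is assumed Hausdorff and second countable.\<close>
definition smooth_atlas ::
  "('m::{t2_space,second_countable_topology} set \<times> ('m \<Rightarrow> 'e::euclidean_space)) set \<Rightarrow> bool" where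
  "smooth_atlas A \<longleftrightarrow>
     (\<Union>(fst ` A) = UNIV) \<and>
     (\<forall>(U, \<phi>) \<in> A. open U \<and> open (\<phi> ` U) \<and> homeomorphism U (\<phi> ` U) \<phi> (inv_into U \<phi>)) \<and>
     (\<forall>(U, \<phi>) \<in> A. \<forall>(V, \<psi>) \<in> A. smooth_on (\<phi> ` (U \<inter> V)) (\<psi> \<circ> inv_into U \<phi>))"

definition diff_into_mfd ::
  "('m::topological_space set \<times> ('m \<Rightarrow> 'e::euclidean_space)) set \<Rightarrow> ('x::euclidean_space \<Rightarrow> 'm) \<Rightarrow> bool" where
  "diff_into_mfd A f \<longleftrightarrow> continuous_on UNIV f \<and>
     (\<forall>(U, \<phi>) \<in> A. \<forall>x. f x \<in> U \<longrightarrow> (\<phi> \<circ> f) differentiable (at x))"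

definition diff_on_mfd ::
  "('m::topological_space set \<times> ('m \<Rightarrow> 'e::euclidean_space)) set \<Rightarrow> ('m \<Rightarrow> real) \<Rightarrow> bool" where
  "diff_on_mfd A p \<longleftrightarrow> continuous_on UNIV p \<and>
     (\<forall>(U, \<phi>) \<in> A. (p \<circ> inv_into U \<phi>) differentiable_on (\<phi> ` U))"

datatype sgnu = Pos | Zero | Neg | U

definition sgnu_of_int :: "int \<Rightarrow> sgnu" where
  "sgnu_of_int k = (if k > 0 then Pos else if k = 0 then Zero else Neg)"

definition sign_on :: "'a set \<Rightarrow> ('a \<Rightarrow> real) \<Rightarrow> sgnu" where
  "sign_on C g = (if \<forall>c\<in>C. g c > 0 then Pos
                  else if \<forall>c\<in>C. g c = 0 then Zero
                  else if \<forall>c\<in>C. g c < 0 then Neg else U)"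

definition partial :: "(real^'n \<Rightarrow> real) \<Rightarrow> 'n \<Rightarrow> real^'n \<Rightarrow> real" where
  "partial g i c = frechet_derivative g (at c) (axis i 1)"

definition total_sign :: "(real^'n) set \<Rightarrow> (real^'n \<Rightarrow> real) \<Rightarrow> 'n \<Rightarrow> sgnu" where
  "total_sign C g = (\<lambda>i. sign_on C (partial g i))"

text \<open>S_n: nonzero tuples in {-1,0,1}^n whose first nonzero entry is 1 (coordinates ordered by
  the linear order of the finite index type 'n, e.g. 1 < 2 < ... < n for numeral types).\<close>
definition S_set :: "(('n::{finite,linorder}) \<Rightarrow> int) set" where
  "S_set = {s. (\<forall>i. s i \<in> {-1,0,1}) \<and> (\<exists>i. s i \<noteq> 0) \<and>
               (\<forall>i. s i \<noteq> 0 \<and> (\<forall>j. s j \<noteq> 0 \<longrightarrow> i \<le> j) \<longrightarrow> s i = 1)}"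

definition eliminates :: "('n \<Rightarrow> sgnu) \<Rightarrow> ('n \<Rightarrow> int) \<Rightarrow> bool" where
  "eliminates t s \<longleftrightarrow>
     (\<exists>i. t i \<noteq> Zero \<and> s i \<noteq> 0) \<and>
     (\<exists>k\<in>{1, -1::int}. \<forall>i. s i \<noteq> 0 \<and> t i \<noteq> Zero \<longrightarrow> t i = sgnu_of_int (k * s i)) \<and>
     (\<forall>i. t i = U \<longrightarrow> s i = 0)"

text \<open>Sens_C(f).  The total sign of pi o f over C is only defined when pi o f is
  differentiable on C, which is made explicit.\<close>
definition Sens ::
  "('m::topological_space set \<times> ('m \<Rightarrow> 'e::euclidean_space)) set \<Rightarrow> (real, 'n::{finite,linorder}) vec set \<Rightarrow> ((real, 'n) vec \<Rightarrow> 'm) \<Rightarrow> ('n \<Rightarrow> int) set" where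
  "Sens A C f = {v \<in> S_set. \<exists>p. diff_on_mfd A p \<and> (\<forall>c\<in>C. (p \<circ> f) differentiable (at c)) \<and>
                              eliminates (total_sign C (p \<circ> f)) v}"

end

theory Submission
  imports Defs
begin

lemma fd_expand:
  fixes g :: "real^'n \<Rightarrow> real"
  assumes "g differentiable (at c)"
  shows "frechet_derivative g (at c) d = (\<Sum>i\<in>UNIV. d$i * partial g i c)"
proof -
  have lin: "linear (frechet_derivative g (at c))"
    using frechet_derivative_works assms has_derivative_linear by metis
  have "frechet_derivative g (at c) d = frechet_derivative g (at c) (\<Sum>i\<in>UNIV. d$i *\<^sub>R axis i 1)"
    using basis_expansion[of d] by (simp add: scalar_mult_eq_scaleR)
  also have "\<dots> = (\<Sum>i\<in>UNIV. d$i * frechet_derivative g (at c) (axis i 1))"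
    by (simp add: linear_sum[OF lin] linear_scale[OF lin])
  finally show ?thesis by (simp add: partial_def)
qed

lemma sign_on_cases:
  assumes "c \<in> C"
  shows "(sign_on C h = Pos \<longrightarrow> h c > 0) \<and> (sign_on C h = Zero \<longrightarrow> h c = 0)
       \<and> (sign_on C h = Neg \<longrightarrow> h c < 0)"
  using assms unfolding sign_on_def by (auto split: if_splits)

theorem theorem3p1:
  fixes A :: "('m::{t2_space,second_countable_topology} set \<times> ('m \<Rightarrow> 'e::euclidean_space)) set"
    and C :: "(real, 'n::{finite,linorder}) vec set"
    and f :: "(real, 'n) vec \<Rightarrow> 'm"
  assumes "smooth_atlas A"
    and "convex C"
    and "diff_into_mfd A f"
    and "Sens A C f = S_set"
  shows "inj_on f C"
proof (rule inj_onI, rule ccontr)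
  fix x y assume xC: "x \<in> C" and yC: "y \<in> C" and fxy: "f x = f y" and ne: "x \<noteq> y"
  define d where "d = y - x"
  have ex: "\<exists>i. d$i \<noteq> 0" using ne unfolding d_def by (metis (no_types) eq_iff_diff_eq_0 vec_eq_iff zero_index)
  define j0 where "j0 = Min {i. d$i \<noteq> 0}"
  have dj0: "d$j0 \<noteq> 0" unfolding j0_def using ex Min_in[of "{i. d$i \<noteq> 0}"] by auto
  have j0le: "d$i \<noteq> 0 \<Longrightarrow> j0 \<le> i" for i unfolding j0_def by (rule Min_le) auto
  define \<sigma> :: real where "\<sigma> = sgn (d$j0)"
  have \<sigma>: "\<sigma> = 1 \<or> \<sigma> = -1" using dj0 by (auto simp: \<sigma>_def sgn_if)
  define s :: "'n \<Rightarrow> int" where "s i = (if \<sigma> * d$i > 0 then 1 else if d$i = 0 then 0 else -1)" for i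
  have s0: "s i = 0 \<longleftrightarrow> d$i = 0" for i using \<sigma> by (auto simp: s_def)
  have pj0: "\<sigma> * d$j0 > 0"
    using dj0 by (cases "d$j0 > 0") (auto simp: \<sigma>_def)
  have sj0: "s j0 = 1" using pj0 by (simp add: s_def)
  have sS: "s \<in> S_set" unfolding S_set_def
  proof (intro CollectI conjI allI impI)
    fix i show "s i \<in> {-1,0,1}" by (simp add: s_def)
  next
    show "\<exists>i. s i \<noteq> 0" using s0 dj0 by blast
  next
    fix i assume h: "s i \<noteq> 0 \<and> (\<forall>j. s j \<noteq> 0 \<longrightarrow> i \<le> j)"
    have "d$i \<noteq> 0" using h s0 by blast
    hence "j0 \<le> i" by (rule j0le)
    moreover have "i \<le> j0" using h s0 dj0 by blast
    ultimately have "i = j0" by simp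
    then show "s i = 1" using sj0 by simp
  qed
  then obtain p where pd: "\<forall>c\<in>C. (p \<circ> f) differentiable (at c)"
    and el: "eliminates (total_sign C (p \<circ> f)) s"
    using assms(4) unfolding Sens_def by blast
  define g where "g = p \<circ> f"
  define t where "t = total_sign C g"
  obtain i0 where i0: "t i0 \<noteq> Zero" "s i0 \<noteq> 0" using el unfolding eliminates_def t_def g_def by blast
  obtain k :: int where k: "k = 1 \<or> k = -1"
    and kt: "\<And>i. s i \<noteq> 0 \<Longrightarrow> t i \<noteq> Zero \<Longrightarrow> t i = sgnu_of_int (k * s i)"
  proof -
    from el obtain k :: int where "k \<in> {1, -1}" and "\<forall>i. s i \<noteq> 0 \<and> t i \<noteq> Zero \<longrightarrow> t i = sgnu_of_int (k * s i)"
      unfolding eliminates_def t_def g_def by blast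
    then show thesis using that by blast
  qed
  have tU: "t i = U \<Longrightarrow> s i = 0" for i using el unfolding eliminates_def t_def g_def by auto
  have term_nn: "real_of_int k * \<sigma> * (d$i * partial g i c) \<ge> 0" 
    and term_pos: "i = i0 \<Longrightarrow> real_of_int k * \<sigma> * (d$i * partial g i c) > 0"
    if cC: "c \<in> C" for i c
  proof -
    have sc: "(t i = Pos \<longrightarrow> partial g i c > 0) \<and> (t i = Zero \<longrightarrow> partial g i c = 0)
       \<and> (t i = Neg \<longrightarrow> partial g i c < 0)"
      using sign_on_cases[OF cC] unfolding t_def total_sign_def by blast
    have "(real_of_int k * \<sigma> * (d$i * partial g i c) \<ge> 0) \<and>
          (t i \<noteq> Zero \<and> s i \<noteq> 0 \<longrightarrow> real_of_int k * \<sigma> * (d$i * partial g i c) > 0)"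
    proof (cases "s i = 0")
      case True then show ?thesis using s0 by simp
    next
      case sne: False
      show ?thesis
      proof (cases "t i = Zero")
        case True then show ?thesis using sc by simp
      next
        case False
        have ti: "t i = sgnu_of_int (k * s i)" using kt sne False by blast
        have dne: "d$i \<noteq> 0" using sne s0 by blast
        have e: "\<sigma> * d$i = of_int (s i) * \<bar>d$i\<bar>"
          using \<sigma> dne by (auto simp: s_def abs_if)
        have e2: "real_of_int k * \<sigma> * (d$i * partial g i c)
                 = real_of_int (k * s i) * (\<bar>d$i\<bar> * partial g i c)"
          by (simp add: e[symmetric] algebra_simps)
        have ks: "k * s i = 1 \<or> k * s i = -1"
          using k sne by (auto simp: s_def)
        have ad: "\<bar>d$i\<bar> > 0" using dne by simp
        have "real_of_int (k * s i) * (\<bar>d$i\<bar> * partial g i c) > 0"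
        proof (cases "k * s i = 1")
          case True
          then have "t i = Pos" using ti by (simp add: sgnu_of_int_def)
          then have "partial g i c > 0" using sc by blast
          then show ?thesis using True ad by simp
        next
          case False
          then have m: "k * s i = -1" using ks by blast
          then have "t i = Neg" using ti by (simp add: sgnu_of_int_def)
          then have "partial g i c < 0" using sc by blast
          then show ?thesis using m ad by (simp add: mult_pos_neg)
        qed
        then have "real_of_int k * \<sigma> * (d$i * partial g i c) > 0" using e2 by linarith
        then show ?thesis by simp
      qed
    qed
    then show "real_of_int k * \<sigma> * (d$i * partial g i c) \<ge> 0"
      and "i = i0 \<Longrightarrow> real_of_int k * \<sigma> * (d$i * partial g i c) > 0" using i0 by auto
  qed
  have sum_pos: "real_of_int k * \<sigma> * (\<Sum>i\<in>UNIV. d$i * partial g i c) > 0" if cC: "c \<in> C" for c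
  proof -
    have "real_of_int k * \<sigma> * (\<Sum>i\<in>UNIV. d$i * partial g i c)
        = (\<Sum>i\<in>UNIV. real_of_int k * \<sigma> * (d$i * partial g i c))"
      by (simp add: sum_distrib_left)
    also have "\<dots> > 0"
      using term_nn[OF cC] term_pos[OF cC]
      by (intro sum_pos2[of UNIV i0]) auto
    finally show ?thesis .
  qed
  define h where "h z = g (x + z *\<^sub>R d)" for z
  have inC: "x + z *\<^sub>R d \<in> C" if "0 \<le> z" "z \<le> 1" for z
  proof -
    have "(1 - z) *\<^sub>R x + z *\<^sub>R y \<in> C" using assms(2)[unfolded convex_alt] xC yC that by simp
    moreover have "(1 - z) *\<^sub>R x + z *\<^sub>R y = x + z *\<^sub>R d" by (simp add: d_def algebra_simps)
    ultimately show ?thesis by simp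
  qed
  have hder: "DERIV h z :> frechet_derivative g (at (x + z *\<^sub>R d)) d" if "0 \<le> z" "z \<le> 1" for z
  proof -
    have gd: "(g has_derivative frechet_derivative g (at (x + z *\<^sub>R d))) (at (x + z *\<^sub>R d))"
      using pd inC[OF that] frechet_derivative_works unfolding g_def by metis
    have ld: "((\<lambda>z. x + z *\<^sub>R d) has_derivative (\<lambda>z. z *\<^sub>R d)) (at z)"
      by (auto intro!: derivative_eq_intros)
    have "(h has_derivative (\<lambda>w. frechet_derivative g (at (x + z *\<^sub>R d)) (w *\<^sub>R d))) (at z)"
      unfolding h_def using has_derivative_compose[OF ld gd] by (simp add: o_def)
    moreover have "linear (frechet_derivative g (at (x + z *\<^sub>R d)))"
      using gd has_derivative_linear by blast
    ultimately show ?thesis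
      by (simp add: has_field_derivative_def linear_scale mult.commute[of _ "frechet_derivative g _ d"])
  qed
  have cont: "continuous_on {0..1} h"
  proof (rule continuous_at_imp_continuous_on, rule ballI)
    fix z :: real assume "z \<in> {0..1}"
    then show "isCont h z" using hder[of z] DERIV_isCont by auto
  qed
  have dif: "\<forall>z. 0 < z \<and> z < 1 \<longrightarrow> h differentiable (at z)"
  proof (intro allI impI)
    fix z :: real assume "0 < z \<and> z < 1"
    then have "DERIV h z :> frechet_derivative g (at (x + z *\<^sub>R d)) d" using hder[of z] by auto
    then show "h differentiable (at z)" unfolding real_differentiable_def by blast
  qed
  have "\<exists>l z. 0 < z \<and> z < 1 \<and> DERIV h z :> l \<and> h 1 - h 0 = (1 - 0) * l"
    using MVT[of 0 1 h] cont dif by simp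
  then obtain l z where z: "0 < z" "z < 1" and dz: "DERIV h z :> l" and hl: "h 1 - h 0 = l" by auto
  have z01: "0 \<le> z" "z \<le> 1" using z by auto
  have cz: "x + z *\<^sub>R d \<in> C" using inC[OF z01] .
  have "l = frechet_derivative g (at (x + z *\<^sub>R d)) d"
    using DERIV_unique[OF dz hder[OF z01]] .
  also have "\<dots> = (\<Sum>i\<in>UNIV. d$i * partial g i (x + z *\<^sub>R d))"
    using fd_expand[of g] pd cz unfolding g_def by metis
  finally have "real_of_int k * \<sigma> * l > 0" using sum_pos[OF cz] by simp
  moreover have "h 1 = h 0" unfolding h_def g_def d_def using fxy by simp
  ultimately show False using hl by simp
qed

end
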